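(* For the 0-1-loss $\ell_{0\text{-}1}(\mathrm{h},(x,y))=1-\mathrm{h}(y|x)$ and training instances $x_1,\dots,x_n$, the problem $\mathscr{P}_{x,\ell_{0\text{-}1}}^{\mathbf{a},\mathbf{b}}$ is equivalent to $$\mathscr{P}_{x,0\text{-}1}^{\mathbf{a},\mathbf{b}}:\ \min_{\boldsymbol{\mu},\boldsymbol{\eta}}\ \tfrac{1}{2}(\mathbf{b}-\mathbf{a})^{\mathrm{T}}\boldsymbol{\eta}-\tfrac{1}{2}(\mathbf{b}+\mathbf{a})^{\mathrm{T}}\boldsymbol{\mu}-\frac{1}{n}\sum_{i=1}^n\varphi_{0\text{-}1}(\boldsymbol{\mu},x_i)\ \text{ s.t. }\boldsymbol{\eta}+\boldsymbol{\mu}\succeq\mathbf{0},\ \boldsymbol{\eta}-\boldsymbol{\mu}\succeq\mathbf{0},$$ with $$\varphi_{0\text{-}1}(\boldsymbol{\mu},x)=\min_{\mathcal{C}\subseteq\mathcal{Y},\mathcal{C}\neq\emptyset}\frac{1-\sum_{y\in\mathcal{C}}\big(\Phi(x,y)^{\mathrm{T}}\boldsymbol{\mu}+1\big)}{|\mathcal{C}|}.$$ In addition, for a solution $\boldsymbol{\mu}^*,\boldsymbol{\eta}^*$ of $\mathscr{P}_{x,0\text{-}1}^{\mathbf{a},\mathbf{b}}$, the condition $\ell_{0\text{-}1}(\mathrm{h},(x,y))+\Phi(x,y)^{\mathrm{T}}\boldsymbol{\mu}^*+\varphi_{\ell_{0\text{-}1}}(\boldsymbol{\mu}^*,x)\leq0$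 for all $x,y$ (which makes $\mathrm{h}$ a 0-1-MRC for $\mathcal{U}_x^{\mathbf{a},\mathbf{b}}$) becomes $$\mathrm{h}(y|x)\geq \Phi(x,y)^{\mathrm{T}}\boldsymbol{\mu}^*+1+\varphi_{0\text{-}1}(\boldsymbol{\mu}^*,x)\quad\forall x\in\mathcal{X},y\in\mathcal{Y}.$$
   Context: Let $\mathcal{X},\mathcal{Y}$ be finite nonempty sets, $\mathcal{Y}=\{1,\dots,|\mathcal{Y}|\}$; $\Delta(\mathcal{Z})$ the probability distributions on a finite set $\mathcal{Z}$. A classification rule $\mathrm{h}$ assigns to each $x$ a distribution $\mathrm{h}(\cdot|x)\in\Delta(\mathcal{Y})$. For a score function $L$ (loss $\ell(\mathrm{h},(x,y))=L(\mathrm{h}(\cdot|x),y)$): $\Phi:\mathcal{X}\times\mathcal{Y}\to\mathbb{R}^m$ is a feature mapping, $\boldsymbol{\Phi}(x,\cdot)$ the $|\mathcal{Y}|\times m$ matrix with rows $\Phi(x,y)^{\mathrm{T}}$, $\mathbf{1}$ the all-ones vector, $\preceq,\succeq$ componentwise, $\mathcal{L}=\{\mathbf{c}\in\mathbb{R}^{|\mathcal{Y}|}:\exists\,\mathrm{q}\in\Delta(\mathcal{Y}),\ \mathbf{c}+(L(\mathrm{q},y))_{y}\preceq\mathbf{0}\}$, $\varphi_\ell(\boldsymbol{\mu},x)=\max\{\nu:\boldsymbol{\Phi}(x,\cdot)\boldsymbol{\mu}+\nu\mathbf{1}\in\mathcal{L}\}$, and $\mathscr{P}_{x,\ell}^{\mathbf{a},\mathbf{b}}$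 is $\min_{\boldsymbol{\mu},\boldsymbol{\eta}}\tfrac12(\mathbf{b}-\mathbf{a})^{\mathrm{T}}\boldsymbol{\eta}-\tfrac12(\mathbf{b}+\mathbf{a})^{\mathrm{T}}\boldsymbol{\mu}-\frac1n\sum_{i=1}^n\varphi_\ell(\boldsymbol{\mu},x_i)$ s.t. $\boldsymbol{\eta}\pm\boldsymbol{\mu}\succeq\mathbf{0}$. With $\mathrm{p}_n$ the empirical distribution of $x_1,\dots,x_n$, $\mathcal{U}_x^{\mathbf{a},\mathbf{b}}=\{\mathrm{p}\in\Delta(\mathcal{X}\times\mathcal{Y}):\mathbf{a}\preceq\mathbb{E}_{\mathrm{p}}\{\Phi\}\preceq\mathbf{b},\ \sum_y\mathrm{p}(x,y)=\mathrm{p}_n(x)\ \forall x\}$, and an $\ell$-MRC for $\mathcal{U}$ minimizes $\max_{\mathrm{p}\in\mathcal{U}}\sum_{x,y}\mathrm{p}(x,y)\ell(\mathrm{h},(x,y))$ over all classification rules. *)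

theory Defs
  imports "HOL-Analysis.Analysis"
begin

definition Delta :: "('y::finite \<Rightarrow> real) set" where
  "Delta = {q. (\<forall>y. 0 \<le> q y) \<and> sum q UNIV = 1}"

definition is_rule :: "('x \<Rightarrow> 'y::finite \<Rightarrow> real) \<Rightarrow> bool" where
  "is_rule h \<longleftrightarrow> (\<forall>x. h x \<in> Delta)"

definition L01 :: "('y \<Rightarrow> real) \<Rightarrow> 'y \<Rightarrow> real" where
  "L01 q y = 1 - q y"

definition loss :: "(('y \<Rightarrow> real) \<Rightarrow> 'y \<Rightarrow> real) \<Rightarrow> ('x \<Rightarrow> 'y \<Rightarrow> real) \<Rightarrow> 'x \<Rightarrow> 'y \<Rightarrow> real" where
  "loss L h x y = L (h x) y"

definition Lset :: "(('y::finite \<Rightarrow> real) \<Rightarrow> 'y \<Rightarrow> real) \<Rightarrow> ('y \<Rightarrow> real) set" where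
  "Lset L = {c. \<exists>q\<in>Delta. \<forall>y. c y + L q y \<le> 0}"

text \<open>\<phi>_\<ell>(\<mu>,x) = max{\<nu>. \<Phi>(x,\<cdot>)\<mu> + \<nu>1 \<in> \<L>} (written as a supremum).\<close>
definition phi_loss :: "(('y::finite \<Rightarrow> real) \<Rightarrow> 'y \<Rightarrow> real) \<Rightarrow> ('x \<Rightarrow> 'y \<Rightarrow> real^'m) \<Rightarrow> real^'m \<Rightarrow> 'x \<Rightarrow> real" where
  "phi_loss L Phi mu x = Sup {\<nu>. (\<lambda>y. Phi x y \<bullet> mu + \<nu>) \<in> Lset L}"

definition phi01 :: "('x \<Rightarrow> 'y::finite \<Rightarrow> real^'m) \<Rightarrow> real^'m \<Rightarrow> 'x \<Rightarrow> real" where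
  "phi01 Phi mu x =
     Min ((\<lambda>C. (1 - (\<Sum>y\<in>C. Phi x y \<bullet> mu + 1)) / real (card C)) ` {C. C \<noteq> {}})"

definition objective :: "(real^'m \<Rightarrow> 'x \<Rightarrow> real) \<Rightarrow> real^'m \<Rightarrow> real^'m \<Rightarrow> 'x list
     \<Rightarrow> real^'m \<Rightarrow> real^'m \<Rightarrow> real" where
  "objective phi a b xs mu eta =
     (1/2) * ((b - a) \<bullet> eta) - (1/2) * ((b + a) \<bullet> mu)
     - (1 / real (length xs)) * (\<Sum>i<length xs. phi mu (xs ! i))"

definition feasible :: "real^'m \<Rightarrow> real^'m \<Rightarrow> bool" where
  "feasible mu eta \<longleftrightarrow> (\<forall>i. 0 \<le> eta $ i + mu $ i \<and> 0 \<le> eta $ i - mu $ i)"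

definition is_solution :: "(real^'m \<Rightarrow> 'x \<Rightarrow> real) \<Rightarrow> real^'m \<Rightarrow> real^'m \<Rightarrow> 'x list
     \<Rightarrow> real^'m \<Rightarrow> real^'m \<Rightarrow> bool" where
  "is_solution phi a b xs mu eta \<longleftrightarrow> feasible mu eta \<and>
     (\<forall>mu' eta'. feasible mu' eta' \<longrightarrow> objective phi a b xs mu eta \<le> objective phi a b xs mu' eta')"

end

theory Submission
  imports Defs
begin

lemma key:
  fixes c :: "'y::finite \<Rightarrow> real"
  shows "Sup {\<nu>. (\<lambda>y. c y + \<nu>) \<in> Lset L01}
       = Min ((\<lambda>C. (1 - (\<Sum>y\<in>C. c y + 1)) / real (card C)) ` {C. C \<noteq> {}})"
proof -
  define f where "f = (\<lambda>C::'y set. (1 - (\<Sum>y\<in>C. c y + 1)) / real (card C))"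
  define m where "m = Min (f ` {C. C \<noteq> {}})"
  have finF: "finite (f ` {C. C \<noteq> {}})" by simp
  have neF: "f ` {C. C \<noteq> {}} \<noteq> {}" by auto
  have mle: "m \<le> f C" if "C \<noteq> {}" for C
    unfolding m_def using finF that by (intro Min_le) auto
  have ineq: "card C * m \<le> 1 - (\<Sum>y\<in>C. c y + 1)" if "C \<noteq> {}" for C :: "'y set"
  proof -
    have "card C > 0" using that by (simp add: card_gt_0_iff)
    then show ?thesis using mle[OF that] unfolding f_def
      by (simp add: le_divide_eq mult.commute)
  qed
  have upper: "\<nu> \<le> m" if hnu: "\<nu> \<in> {\<nu>. (\<lambda>y. c y + \<nu>) \<in> Lset L01}" for \<nu>
  proof -
    obtain q where q: "q \<in> Delta" "\<forall>y. c y + \<nu> + (1 - q y) \<le> 0"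
      using hnu unfolding Lset_def L01_def mem_Collect_eq by blast
    have "m \<in> f ` {C. C \<noteq> {}}" unfolding m_def using finF neF by (rule Min_in)
    then obtain C0 where C0: "C0 \<noteq> {}" "m = f C0" by auto
    have q0: "\<forall>y. 0 \<le> q y" "sum q UNIV = 1" using q(1) unfolding Delta_def by auto
    have "(\<Sum>y\<in>C0. c y + 1 + \<nu>) \<le> (\<Sum>y\<in>C0. q y)"
      using q(2) by (intro sum_mono) (smt (verit))
    also have "\<dots> \<le> sum q UNIV" using q0 by (intro sum_mono2) auto
    finally have "(\<Sum>y\<in>C0. c y + 1) + card C0 * \<nu> \<le> 1"
      using q0 by (simp add: sum.distrib)
    moreover have "card C0 > 0" using C0 by (simp add: card_gt_0_iff)
    ultimately have "\<nu> \<le> f C0" unfolding f_def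
      by (simp add: le_divide_eq mult.commute)
    then show ?thesis using C0 by simp
  qed
  have mem: "m \<in> {\<nu>. (\<lambda>y. c y + \<nu>) \<in> Lset L01}"
  proof -
    define g where "g = (\<lambda>y. max 0 (c y + 1 + m))"
    define C where "C = {y. 0 < c y + 1 + m}"
    have "sum g UNIV = sum g C"
      by (intro sum.mono_neutral_right) (auto simp: g_def C_def)
    also have "sum g C = (\<Sum>y\<in>C. c y + 1 + m)" unfolding g_def C_def by (intro sum.cong) auto
    finally have sg: "sum g UNIV = (\<Sum>y\<in>C. c y + 1) + card C * m" by (simp add: sum.distrib)
    have sg1: "sum g UNIV \<le> 1"
    proof (cases "C = {}")
      case True then show ?thesis using sg by simp
    next
      case False then show ?thesis using sg ineq[OF False] by simp
    qed
    define q where "q = (\<lambda>y. g y + (1 - sum g UNIV) / real CARD('y))"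
    have g0: "0 \<le> g y" for y unfolding g_def by simp
    have "sum q UNIV = sum g UNIV + real CARD('y) * ((1 - sum g UNIV) / real CARD('y))"
      unfolding q_def by (simp add: sum.distrib)
    also have "\<dots> = 1" by simp
    finally have "q \<in> Delta" unfolding Delta_def q_def using g0 sg1 by auto
    moreover have "c y + m + (1 - q y) \<le> 0" for y
    proof -
      have "c y + 1 + m \<le> g y" unfolding g_def by simp
      moreover have "0 \<le> (1 - sum g UNIV) / real CARD('y)" using sg1 by simp
      ultimately show ?thesis unfolding q_def by simp
    qed
    ultimately show ?thesis unfolding Lset_def L01_def by auto
  qed
  have "Sup {\<nu>. (\<lambda>y. c y + \<nu>) \<in> Lset L01} = m"
    by (rule cSup_eq_maximum[OF mem]) (use upper in auto)
  then show ?thesis unfolding m_def f_def .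
qed

lemma phi_eq: "phi_loss L01 Phi mu x = phi01 Phi mu x"
  unfolding phi_loss_def phi01_def by (rule key)

theorem corollary7:
  fixes Phi :: "'x::finite \<Rightarrow> 'y::finite \<Rightarrow> real^'m"
    and a b :: "real^'m" and xs :: "'x list"
  assumes "xs \<noteq> []"
  shows "(\<forall>mu x. phi_loss L01 Phi mu x = phi01 Phi mu x)
    \<and> (\<forall>mu eta. objective (phi_loss L01 Phi) a b xs mu eta = objective (phi01 Phi) a b xs mu eta)
    \<and> (\<forall>mu eta. is_solution (phi_loss L01 Phi) a b xs mu eta \<longleftrightarrow> is_solution (phi01 Phi) a b xs mu eta)
    \<and> (\<forall>mus etas h. is_solution (phi01 Phi) a b xs mus etas \<longrightarrow> is_rule h \<longrightarrow>
         ((\<forall>x y. loss L01 h x y + Phi x y \<bullet> mus + phi_loss L01 Phi mus x \<le> 0)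
          \<longleftrightarrow> (\<forall>x y. h x y \<ge> Phi x y \<bullet> mus + 1 + phi01 Phi mus x)))"
proof -
  have e: "phi_loss L01 Phi = phi01 Phi" by (intro ext phi_eq)
  have aux: "\<And>u v w::real. (1 - u + v + w \<le> 0) = (v + 1 + w \<le> u)" by linarith
  show ?thesis unfolding e loss_def L01_def aux by simp
qed

end
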